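(* Let $R$ be a commutative ring with $\mathbb{Q}\subseteq R$, $\mathcal{A}$ a commutative unital $R$-algebra, and $\mathcal{E}$ a finitely generated projective $\mathcal{A}$-module with a symmetric, strongly nondegenerate, full $\mathcal{A}$-bilinear form $\langle\cdot,\cdot\rangle$. Let $\hat{\mathcal{C}}^\bullet(\mathcal{E})$ be the $\wedge$-subalgebra of $\mathcal{C}^\bullet(\mathcal{E})$ generated by $\mathcal{A}$, $\mathcal{E}$ and $\mathcal{C}^2(\mathcal{E})$, and let $\hat{\mathcal{C}}^3(\mathcal{E})=\hat{\mathcal{C}}^\bullet(\mathcal{E})\cap\mathcal{C}^3(\mathcal{E})$. Then $\hat{\mathcal{C}}^3(\mathcal{E})=\mathcal{C}^3(\mathcal{E})$.
   Context: Strongly nondegenerate: $\mathcal{E}\to\operatorname{Hom}_{\mathcal{A}}(\mathcal{E},\mathcal{A})$ is an isomorphism. Full: every $a\in\mathcal{A}$ is a finite sum $\sum_i\langle x_i,y_i\rangle$. $\operatorname{Der}(\mathcal{A})$: $R$-linear derivations of $\mathcal{A}$. Set $\mathcal{C}^0(\mathcal{E})=\mathcal{A}$ and $\mathcal{C}^1(\mathcal{E})=\mathcal{E}$. For $r\ge2$, $\mathcal{C}^r(\mathcal{E})$ is the set of $\mathsf{C}\in\operatorname{Hom}_R(\mathcal{E}^{\otimes_R(r-1)},\mathcal{E})$ admitting an $R$-multilinear $\sigma_{\mathsf{C}}:\mathcal{E}^{\otimes(r-2)}\to\operatorname{Der}(\mathcal{A})$ with two properties: (1) $\sigma_{\mathsf{C}}(x_1,\dots,x_{r-2})\langle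 u,w\rangle=\langle\mathsf{C}(x_1,\dots,x_{r-2},u),w\rangle+\langle u,\mathsf{C}(x_1,\dots,x_{r-2},w)\rangle$; (2) for $r\ge3$ and $1\le i\le r-2$, $\langle\mathsf{C}(\dots,x_i,x_{i+1},\dots)+\mathsf{C}(\dots,x_{i+1},x_i,\dots),u\rangle=\sigma_{\mathsf{C}}(x_1,\dots,\widehat{x_i},\widehat{x_{i+1}},\dots,x_{r-1},u)\langle x_i,x_{i+1}\rangle$. For $\mathsf{C}\in\mathcal{C}^r$ with $r\ge2$, $i_x\mathsf{C}$ inserts $x\in\mathcal{E}$ in the first argument; for $r=2$, $i_x\mathsf{C}=\mathsf{C}(x)\in\mathcal{E}$. The product $\wedge$ on $\mathcal{C}^\bullet(\mathcal{E})=\bigoplus_r\mathcal{C}^r(\mathcal{E})$ is the unique $R$-bilinear, degree-$0$ product with $a\wedge b=ab$ and $a\wedge x=ax=x\wedge a$ for $a,b\in\mathcal{A}$, $x\in\mathcal{E}$, satisfying $i_x(\mathsf{C}_1\wedge\mathsf{C}_2)=(-1)^s(i_x\mathsf{C}_1)\wedge\mathsf{C}_2+\mathsf{C}_1\wedge(i_x\mathsf{C}_2)$ for $\mathsf{C}_1\in\mathcal{C}^r$, $\mathsf{C}_2\in\mathcal{C}^s$. Here, for degree-$1$ elements $y\in\mathcal{E}$, one sets $i_xy=\langle y,x\rangle$, and $i_x$ of an element of $\mathcal{A}$ is $0$. This product is associative and graded commutative. *)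

theory Defs
  imports Complex_Main
begin

text \<open>R is a type 'r, A a type 'a; the R-algebra structure of A is a unital ring
  homomorphism phi : R -> A.  E is a type 'e with an A-module structure sc.\<close>

definition unital_ring_hom :: "('r::comm_ring_1 \<Rightarrow> 'a::comm_ring_1) \<Rightarrow> bool" where
  "unital_ring_hom phi \<longleftrightarrow> phi 1 = 1 \<and> (\<forall>x y. phi (x + y) = phi x + phi y)
     \<and> (\<forall>x y. phi (x * y) = phi x * phi y)"

text \<open>Q is contained in R: every positive integer is invertible in R.\<close>
definition contains_rationals :: "'r::comm_ring_1 itself \<Rightarrow> bool" where
  "contains_rationals _ \<longleftrightarrow> (\<forall>n::nat. 0 < n \<longrightarrow> (\<exists>c::'r. of_nat n * c = 1))"

text \<open>Finitely generated projective: a direct summand of a free module A^n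
  (A^n realised as functions nat => A vanishing from n on).\<close>
definition fg_projective :: "('a::comm_ring_1 \<Rightarrow> 'e::ab_group_add \<Rightarrow> 'e) \<Rightarrow> bool" where
  "fg_projective sc \<longleftrightarrow> (\<exists>(n::nat) (i::'e \<Rightarrow> nat \<Rightarrow> 'a) (p::(nat \<Rightarrow> 'a) \<Rightarrow> 'e).
      (\<forall>x k. n \<le> k \<longrightarrow> i x k = 0)
    \<and> (\<forall>x y. i (x + y) = (\<lambda>k. i x k + i y k))
    \<and> (\<forall>a x. i (sc a x) = (\<lambda>k. a * i x k))
    \<and> (\<forall>f g. p (\<lambda>k. f k + g k) = p f + p g)
    \<and> (\<forall>a f. p (\<lambda>k. a * f k) = sc a (p f))
    \<and> (\<forall>x. p (i x) = x))"

definition bilinear_form :: "('a::comm_ring_1 \<Rightarrow> 'e::ab_group_add \<Rightarrow> 'e) \<Rightarrow> ('e \<Rightarrow> 'e \<Rightarrow> 'a) \<Rightarrow> bool" where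
  "bilinear_form sc B \<longleftrightarrow>
     (\<forall>x y z. B (x + y) z = B x z + B y z) \<and> (\<forall>a x z. B (sc a x) z = a * B x z)
   \<and> (\<forall>x y z. B z (x + y) = B z x + B z y) \<and> (\<forall>a x z. B z (sc a x) = a * B z x)"

definition symmetric_form :: "('e \<Rightarrow> 'e \<Rightarrow> 'a) \<Rightarrow> bool" where
  "symmetric_form B \<longleftrightarrow> (\<forall>x y. B x y = B y x)"

definition strongly_nondegenerate ::
  "('a::comm_ring_1 \<Rightarrow> 'e::ab_group_add \<Rightarrow> 'e) \<Rightarrow> ('e \<Rightarrow> 'e \<Rightarrow> 'a) \<Rightarrow> bool" where
  "strongly_nondegenerate sc B \<longleftrightarrow> bij_betw B UNIV {f. module_hom sc (*) f}"

definition full_form :: "('e \<Rightarrow> 'e \<Rightarrow> 'a::comm_ring_1) \<Rightarrow> bool" where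
  "full_form B \<longleftrightarrow> (\<forall>a. \<exists>(n::nat) x y. a = (\<Sum>i<n. B (x i) (y i)))"

definition is_derivation :: "('r \<Rightarrow> 'a::comm_ring_1) \<Rightarrow> ('a \<Rightarrow> 'a) \<Rightarrow> bool" where
  "is_derivation phi D \<longleftrightarrow> (\<forall>a b. D (a + b) = D a + D b) \<and> (\<forall>c a. D (phi c * a) = phi c * D a)
     \<and> (\<forall>a b. D (a * b) = a * D b + b * D a)"

text \<open>R-multilinear maps of n arguments from E (arguments given as a list of length n)
  into a target with addition addT and R-scaling scT.\<close>
definition multilinear_R ::
  "('r \<Rightarrow> 'a::comm_ring_1) \<Rightarrow> ('a \<Rightarrow> 'e::ab_group_add \<Rightarrow> 'e) \<Rightarrow> nat \<Rightarrow>
   ('b \<Rightarrow> 'b \<Rightarrow> 'b) \<Rightarrow> ('r \<Rightarrow> 'b \<Rightarrow> 'b) \<Rightarrow> ('e list \<Rightarrow> 'b) \<Rightarrow> bool" where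
  "multilinear_R phi sc n addT scT f \<longleftrightarrow>
     (\<forall>xs i y z. length xs = n \<longrightarrow> i < n \<longrightarrow>
        f (xs[i := y + z]) = addT (f (xs[i := y])) (f (xs[i := z])))
   \<and> (\<forall>xs i c y. length xs = n \<longrightarrow> i < n \<longrightarrow>
        f (xs[i := sc (phi c) y]) = scT c (f (xs[i := y])))"

text \<open>C^r(E) for r >= 2: an element is an R-multilinear map E^(r-1) -> E, represented as a
  function on lists of length r-1 (normalised to be 0 on lists of other length),
  admitting sigma_C : E^(r-2) -> Der(A), R-multilinear, with properties (1) and (2).
  Positions are 0-based: the paper's i (1 <= i <= r-2) is our i+1.\<close>
definition Cmod ::
  "('r::comm_ring_1 \<Rightarrow> 'a::comm_ring_1) \<Rightarrow> ('a \<Rightarrow> 'e::ab_group_add \<Rightarrow> 'e) \<Rightarrow> ('e \<Rightarrow> 'e \<Rightarrow> 'a) \<Rightarrow>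
   nat \<Rightarrow> ('e list \<Rightarrow> 'e) set" where
  "Cmod phi sc B r = {C.
     (\<forall>xs. length xs \<noteq> r - 1 \<longrightarrow> C xs = 0)
   \<and> multilinear_R phi sc (r - 1) (+) (\<lambda>c v. sc (phi c) v) C
   \<and> (\<exists>\<sigma> :: 'e list \<Rightarrow> 'a \<Rightarrow> 'a.
        (\<forall>xs. length xs = r - 2 \<longrightarrow> is_derivation phi (\<sigma> xs))
      \<and> multilinear_R phi sc (r - 2) (\<lambda>D1 D2 a. D1 a + D2 a) (\<lambda>c D a. phi c * D a) \<sigma>
      \<and> (\<forall>xs u w. length xs = r - 2 \<longrightarrow>
           \<sigma> xs (B u w) = B (C (xs @ [u])) w + B u (C (xs @ [w])))
      \<and> (3 \<le> r \<longrightarrow> (\<forall>xs u i. length xs = r - 1 \<longrightarrow> i < r - 2 \<longrightarrow>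
           B (C xs + C (xs[i := xs ! Suc i, Suc i := xs ! i])) u
             = \<sigma> (take i xs @ drop (Suc (Suc i)) xs @ [u]) (B (xs ! i) (xs ! Suc i)))))}"

text \<open>A homogeneous element of degree r is encoded by its full contraction, an A-valued
  function of r arguments (lists of length r, 0 elsewhere): a in A by the constant a,
  y in E by w |-> <y,w>, and C in C^r (r >= 2) by (x_1..x_{r-1},w) |-> <C(x_1..x_{r-1}),w>.
  By strong nondegeneracy this encoding is injective, and i_x corresponds to
  fixing the first argument to x.\<close>
definition encA :: "'a::comm_ring_1 \<Rightarrow> 'e list \<Rightarrow> 'a" where
  "encA a = (\<lambda>xs. if xs = [] then a else 0)"

definition encE :: "('e \<Rightarrow> 'e \<Rightarrow> 'a::comm_ring_1) \<Rightarrow> 'e \<Rightarrow> 'e list \<Rightarrow> 'a" where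
  "encE B y = (\<lambda>xs. if length xs = 1 then B y (hd xs) else 0)"

definition encC :: "('e \<Rightarrow> 'e \<Rightarrow> 'a::comm_ring_1) \<Rightarrow> nat \<Rightarrow> ('e list \<Rightarrow> 'e) \<Rightarrow> 'e list \<Rightarrow> 'a" where
  "encC B r C = (\<lambda>xs. if length xs = r then B (C (butlast xs)) (last xs) else 0)"

text \<open>The wedge product of homogeneous elements of degrees r and s (in encoded form),
  defined by the recursion i_x(C1 ^ C2) = (-1)^s (i_x C1) ^ C2 + C1 ^ (i_x C2),
  i_x of a degree-0 element being 0, with a ^ b = ab in degree 0.\<close>
fun wedge :: "nat \<Rightarrow> nat \<Rightarrow> ('e list \<Rightarrow> 'a::comm_ring_1) \<Rightarrow> ('e list \<Rightarrow> 'a) \<Rightarrow> 'e list \<Rightarrow> 'a" where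
  "wedge r s f g [] = (if r = 0 \<and> s = 0 then f [] * g [] else 0)"
| "wedge r s f g (x # xs) =
     (if 0 < r then (-1) ^ s * wedge (r - 1) s (\<lambda>ys. f (x # ys)) g xs else 0)
   + (if 0 < s then wedge r (s - 1) f (\<lambda>ys. g (x # ys)) xs else 0)"

text \<open>Elements of the direct sum: degree |-> homogeneous component.\<close>
type_synonym ('e, 'a) graded = "nat \<Rightarrow> 'e list \<Rightarrow> 'a"

definition gsingle :: "nat \<Rightarrow> ('e list \<Rightarrow> 'a::zero) \<Rightarrow> ('e, 'a) graded" where
  "gsingle r F = (\<lambda>n. if n = r then F else (\<lambda>_. 0))"

definition gadd :: "('e, 'a::plus) graded \<Rightarrow> ('e, 'a) graded \<Rightarrow> ('e, 'a) graded" where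
  "gadd u v = (\<lambda>n xs. u n xs + v n xs)"

definition gscale :: "('r \<Rightarrow> 'a::times) \<Rightarrow> 'r \<Rightarrow> ('e, 'a) graded \<Rightarrow> ('e, 'a) graded" where
  "gscale phi c u = (\<lambda>n xs. phi c * u n xs)"

definition gwedge :: "('e, 'a::comm_ring_1) graded \<Rightarrow> ('e, 'a) graded \<Rightarrow> ('e, 'a) graded" where
  "gwedge u v = (\<lambda>n xs. \<Sum>r\<le>n. wedge r (n - r) (u r) (v (n - r)) xs)"

inductive_set gen_subalg ::
  "('r::comm_ring_1 \<Rightarrow> 'a::comm_ring_1) \<Rightarrow> ('a \<Rightarrow> 'e::ab_group_add \<Rightarrow> 'e) \<Rightarrow> ('e \<Rightarrow> 'e \<Rightarrow> 'a) \<Rightarrow>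
   ('e, 'a) graded set"
  for phi sc B where
  genA: "gsingle 0 (encA a) \<in> gen_subalg phi sc B"
| genE: "gsingle 1 (encE B y) \<in> gen_subalg phi sc B"
| genC2: "C \<in> Cmod phi sc B 2 \<Longrightarrow> gsingle 2 (encC B 2 C) \<in> gen_subalg phi sc B"
| gen0: "(\<lambda>n xs. 0) \<in> gen_subalg phi sc B"
| genAdd: "u \<in> gen_subalg phi sc B \<Longrightarrow> v \<in> gen_subalg phi sc B \<Longrightarrow> gadd u v \<in> gen_subalg phi sc B"
| genScale: "u \<in> gen_subalg phi sc B \<Longrightarrow> gscale phi c u \<in> gen_subalg phi sc B"
| genWedge: "u \<in> gen_subalg phi sc B \<Longrightarrow> v \<in> gen_subalg phi sc B \<Longrightarrow> gwedge u v \<in> gen_subalg phi sc B"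

definition Chat3 ::
  "('r::comm_ring_1 \<Rightarrow> 'a::comm_ring_1) \<Rightarrow> ('a \<Rightarrow> 'e::ab_group_add \<Rightarrow> 'e) \<Rightarrow> ('e \<Rightarrow> 'e \<Rightarrow> 'a) \<Rightarrow>
   ('e list \<Rightarrow> 'e) set" where
  "Chat3 phi sc B = {C \<in> Cmod phi sc B 3. gsingle 3 (encC B 3 C) \<in> gen_subalg phi sc B}"

end

theory Submission
  imports Defs
begin

lemma wedge_zero_left: "wedge r s (\<lambda>_. 0) g xs = 0"
  by (induction xs arbitrary: r s g) auto

lemma wedge_zero_right: "wedge r s f (\<lambda>_. 0) xs = 0"
  by (induction xs arbitrary: r s f) auto

lemma wedge_len: "length xs \<noteq> r + s \<Longrightarrow> wedge r s f g xs = 0"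
proof (induction xs arbitrary: r s f g)
  case Nil then show ?case by auto
next
  case (Cons x xs)
  show ?case
  proof -
    have a: "0 < r \<Longrightarrow> wedge (r - 1) s (\<lambda>ys. f (x # ys)) g xs = 0"
      using Cons by (intro Cons.IH) auto
    have b: "0 < s \<Longrightarrow> wedge r (s - 1) f (\<lambda>ys. g (x # ys)) xs = 0"
      using Cons by (intro Cons.IH) auto
    show ?thesis by (simp only: wedge.simps) (use a b in auto)
  qed
qed

lemma wedge_12: "wedge 1 2 (encE B y) (encC B 2 D) [x1,x2,u] =
   B y x1 * B (D [x2]) u - B y x2 * B (D [x1]) u + B (D [x1]) x2 * B y u"
  by (simp add: encE_def encC_def numeral_2_eq_2 algebra_simps)

lemma gwedge_12: "gwedge (gsingle 1 E) (gsingle 2 G) = gsingle 3 (wedge 1 2 E G)"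
proof (intro ext)
  fix m xs
  have "gwedge (gsingle 1 E) (gsingle 2 G) m xs =
        (\<Sum>r\<le>m. if r = 1 then (if m - r = 2 then wedge 1 2 E G xs else 0) else 0)"
    unfolding gwedge_def gsingle_def
    by (intro sum.cong refl) (auto simp: wedge_zero_left wedge_zero_right)
  also have "\<dots> = (if m = 3 then wedge 1 2 E G xs else 0)"
    by (auto simp: sum.delta)
  finally show "gwedge (gsingle 1 E) (gsingle 2 G) m xs = gsingle 3 (wedge 1 2 E G) m xs"
    by (simp add: gsingle_def)
qed

lemma gen_sum: "(\<And>i. i < (m::nat) \<Longrightarrow> u i \<in> gen_subalg phi sc B) \<Longrightarrow>
   (\<lambda>d xs. \<Sum>i<m. u i d xs) \<in> gen_subalg phi sc B"
proof (induction m)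
  case 0 then show ?case using gen0 by simp
next
  case (Suc m)
  have "(\<lambda>d xs. \<Sum>i<Suc m. u i d xs) = gadd (\<lambda>d xs. \<Sum>i<m. u i d xs) (u m)"
    by (simp add: gadd_def)
  then show ?case using Suc by (auto intro!: genAdd)
qed

lemma module_mult: "module ((*) :: 'a::comm_ring_1 \<Rightarrow> 'a \<Rightarrow> 'a)"
  by unfold_locales (simp_all add: algebra_simps)


locale cfg = module sc
  for sc :: "'a::comm_ring_1 \<Rightarrow> 'e::ab_group_add \<Rightarrow> 'e" +
  fixes phi :: "'r::comm_ring_1 \<Rightarrow> 'a" and B :: "'e \<Rightarrow> 'e \<Rightarrow> 'a"
    and n :: nat and e f :: "nat \<Rightarrow> 'e" and half third :: 'a
  assumes bil: "bilinear_form sc B" and sym: "symmetric_form B"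
    and nd: "strongly_nondegenerate sc B" and full: "full_form B"
    and frame: "\<And>z. z = (\<Sum>k<n. sc (B (f k) z) (e k))"
    and half: "2 * half = 1" and third: "3 * third = 1"
begin

lemma Badd1: "B (x + y) z = B x z + B y z" using bil unfolding bilinear_form_def by blast
lemma Bsc1: "B (sc a x) z = a * B x z" using bil unfolding bilinear_form_def by blast
lemma Badd2: "B z (x + y) = B z x + B z y" using bil unfolding bilinear_form_def by blast
lemma Bsc2: "B z (sc a x) = a * B z x" using bil unfolding bilinear_form_def by blast
lemma Bsym: "B x y = B y x" using sym unfolding symmetric_form_def by blast

lemma Binj: "B x = B y \<Longrightarrow> x = y"
  using nd unfolding strongly_nondegenerate_def bij_betw_def inj_def by blast

lemma mh: "(\<And>x y. g (x + y) = g x + g y) \<Longrightarrow> (\<And>a x. g (sc a x) = a * g x) \<Longrightarrow>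
    module_hom sc (*) g"
  unfolding module_hom_def module_hom_axioms_def using module_axioms module_mult by auto

lemma Bsurj: "(\<And>x y. g (x + y) = g x + g y) \<Longrightarrow> (\<And>a x. g (sc a x) = a * g x) \<Longrightarrow>
    \<exists>v. B v = g"
  using mh[of g] nd unfolding strongly_nondegenerate_def bij_betw_def by (metis (mono_tags, lifting) imageE mem_Collect_eq)

lemma expand:
  assumes "\<And>x y. g (x + y) = g x + g y" "\<And>a x. g (sc a x) = a * g x"
  shows "g z = (\<Sum>k<n. B (f k) z * g (e k))"
proof -
  have ad: "additive g" by unfold_locales (rule assms(1))
  have "g z = g (\<Sum>k<n. sc (B (f k) z) (e k))" using arg_cong[OF frame[of z], of g] .
  also have "\<dots> = (\<Sum>k<n. g (sc (B (f k) z) (e k)))" by (rule additive.sum[OF ad])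
  also have "\<dots> = (\<Sum>k<n. B (f k) z * g (e k))" using assms(2) by simp
  finally show ?thesis .
qed

lemma F2: "(\<Sum>k<n. B (f k) p * B (e k) q) = B p q"
  using expand[of "\<lambda>z. B z q" p] Badd1 Bsc1 by simp

lemma F3: "(\<Sum>k<n. B (e k) p * B (f k) q) = B p q"
  using F2[of q p] by (simp add: Bsym mult.commute)

end

locale cfgC = cfg +
  fixes C and \<sigma>
  assumes Cml: "multilinear_R phi sc 2 (+) (\<lambda>c v. sc (phi c) v) C"
    and sder: "\<forall>xs. length xs = 1 \<longrightarrow> is_derivation phi (\<sigma> xs)"
    and sml: "multilinear_R phi sc 1 (\<lambda>D1 D2 a. D1 a + D2 a) (\<lambda>c D a. phi c * D a) \<sigma>"
    and s1: "\<forall>xs u w. length xs = 1 \<longrightarrow> \<sigma> xs (B u w) = B (C (xs @ [u])) w + B u (C (xs @ [w]))"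
    and s2: "\<forall>xs u i. length xs = 2 \<longrightarrow> i < 1 \<longrightarrow>
           B (C xs + C (xs[i := xs ! Suc i, Suc i := xs ! i])) u
             = \<sigma> (take i xs @ drop (Suc (Suc i)) xs @ [u]) (B (xs ! i) (xs ! Suc i))"
begin

lemmas Cml1 = conjunct1[OF Cml[unfolded multilinear_R_def], rule_format]
lemmas Cml2 = conjunct2[OF Cml[unfolded multilinear_R_def], rule_format]
lemmas sml1 = conjunct1[OF sml[unfolded multilinear_R_def], rule_format]
lemmas sml2 = conjunct2[OF sml[unfolded multilinear_R_def], rule_format]

definition c where "c x y u = B (C [x, y]) u"

lemma sg_add: "\<sigma> [x + y] a = \<sigma> [x] a + \<sigma> [y] a"
proof -
  have "\<sigma> ([x][0 := x + y]) = (\<lambda>a. \<sigma> ([x][0 := x]) a + \<sigma> ([x][0 := y]) a)"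
    using sml1[of "[x]" 0 x y] by simp
  then show ?thesis by (simp add: fun_eq_iff)
qed

lemma sg_phi: "\<sigma> [sc (phi k) x] a = phi k * \<sigma> [x] a"
proof -
  have "\<sigma> ([x][0 := sc (phi k) x]) = (\<lambda>a. phi k * \<sigma> ([x][0 := x]) a)"
    using sml2[of "[x]" 0 k x] by simp
  then show ?thesis by (simp add: fun_eq_iff)
qed

lemma der: "is_derivation phi (\<sigma> [x])" using sder by simp

lemma der_add: "\<sigma> [x] (a + b) = \<sigma> [x] a + \<sigma> [x] b"
  using der[of x] unfolding is_derivation_def by blast
lemma der_mult: "\<sigma> [x] (a * b) = a * \<sigma> [x] b + b * \<sigma> [x] a"
  using der[of x] unfolding is_derivation_def by blast
lemma der_phi: "\<sigma> [x] (phi k * a) = phi k * \<sigma> [x] a"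
  using der[of x] unfolding is_derivation_def by blast
lemma der_sum: "\<sigma> [x] (sum g K) = (\<Sum>k\<in>K. \<sigma> [x] (g k))"
proof -
  have "additive (\<sigma> [x])" by unfold_locales (rule der_add)
  then show ?thesis by (rule additive.sum)
qed

lemma C_add1: "C [x + y, z] = C [x, z] + C [y, z]"
  using Cml1[of "[x,z]" 0 x y] by simp
lemma C_add2: "C [z, x + y] = C [z, x] + C [z, y]"
  using Cml1[of "[z,x]" 1 x y] by simp
lemma C_phi1: "C [sc (phi k) x, z] = sc (phi k) (C [x, z])"
  using Cml2[of "[x,z]" 0 k x] by simp
lemma C_phi2: "C [z, sc (phi k) x] = sc (phi k) (C [z, x])"
  using Cml2[of "[z,x]" 1 k x] by simp

lemma c_add1: "c (x + y) p q = c x p q + c y p q" by (simp add: c_def C_add1 Badd1)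
lemma c_add2: "c p (x + y) q = c p x q + c p y q" by (simp add: c_def C_add2 Badd1)
lemma c_add3: "c p q (x + y) = c p q x + c p q y" by (simp add: c_def Badd2)
lemma c_phi2: "c p (sc (phi k) x) q = phi k * c p x q" by (simp add: c_def C_phi2 Bsc1)
lemma c_sc3: "c p q (sc a x) = a * c p q x" by (simp add: c_def Bsc2)

lemma R1: "\<sigma> [x] (B u w) = c x u w + c x w u"
  using s1[rule_format, of "[x]" u w] by (simp add: c_def Bsym[of u])

lemma R2: "c x y u + c y x u = \<sigma> [u] (B x y)"
  using s2[rule_format, of "[x,y]" 0 u] by (simp add: c_def Badd1)

lemma sg_scB: "\<sigma> [sc a x] (B u w) = a * \<sigma> [x] (B u w)"
proof -
  have 1: "\<sigma> [sc a x] (B u w) = c (sc a x) u w + c (sc a x) w u" by (rule R1)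
  have 2: "c (sc a x) u w + c u (sc a x) w = \<sigma> [w] (B (sc a x) u)" by (rule R2)
  have 3: "\<sigma> [u] (B (sc a x) w) = c u (sc a x) w + c u w (sc a x)" by (rule R1)
  have 4: "c (sc a x) w u + c w (sc a x) u = \<sigma> [u] (B (sc a x) w)" by (rule R2)
  have 5: "\<sigma> [w] (B (sc a x) u) = c w (sc a x) u + c w u (sc a x)" by (rule R1)
  have 6: "c u w (sc a x) = a * c u w x" "c w u (sc a x) = a * c w u x" by (rule c_sc3)+
  have 7: "c u w x + c w u x = \<sigma> [x] (B u w)" by (rule R2)
  have A: "c (sc a x) u w = c w (sc a x) u + c w u (sc a x) - c u (sc a x) w"
    using 2 5 by (metis add_diff_cancel_right')
  have B: "c (sc a x) w u = c u (sc a x) w + c u w (sc a x) - c w (sc a x) u"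
    using 3 4 by (metis add_diff_cancel_right')
  have "\<sigma> [sc a x] (B u w) = c w u (sc a x) + c u w (sc a x)"
    unfolding 1 A B by (simp add: algebra_simps)
  also have "\<dots> = a * (c u w x + c w u x)" unfolding 6 by (simp add: algebra_simps)
  finally show ?thesis unfolding 7 .
qed

lemma sg_sc: "\<sigma> [sc a x] b = a * \<sigma> [x] b"
proof -
  obtain m :: nat and xx yy where b: "b = (\<Sum>i<m. B (xx i) (yy i))"
    using full unfolding full_form_def by blast
  show ?thesis unfolding b der_sum sg_scB by (simp add: sum_distrib_left)
qed

end

context cfgC begin

definition T where
  "T z p q = half * (\<Sum>k<n. \<sigma> [z] (B (f k) p) * B (e k) q + \<sigma> [z] (B (e k) p) * B (f k) q)"

lemma T_metric: "T z p q + T z q p = \<sigma> [z] (B p q)"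
proof -
  have "T z p q + T z q p = half * (\<Sum>k<n. \<sigma> [z] (B (f k) p * B (e k) q) + \<sigma> [z] (B (e k) p * B (f k) q))"
    unfolding T_def der_mult by (simp add: algebra_simps sum.distrib)
  also have "\<dots> = half * (\<sigma> [z] (B p q) + \<sigma> [z] (B p q))"
    by (simp add: sum.distrib der_sum[symmetric] F2 F3)
  also have "\<dots> = (2 * half) * \<sigma> [z] (B p q)" by (simp add: algebra_simps)
  finally show ?thesis using half by simp
qed

lemma T_add1: "T (x + y) p q = T x p q + T y p q"
  unfolding T_def sg_add by (simp add: algebra_simps sum.distrib)
lemma T_sc1: "T (sc a x) p q = a * T x p q"
  unfolding T_def sg_sc by (simp add: algebra_simps sum_distrib_left)
lemma T_add2: "T z (x + y) q = T z x q + T z y q"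
  unfolding T_def Badd2 der_add by (simp add: algebra_simps sum.distrib)
lemma T_phi2: "T z (sc (phi k) x) q = phi k * T z x q"
  unfolding T_def Bsc2 der_phi by (simp add: algebra_simps sum_distrib_left)
lemma T_add3: "T z p (x + y) = T z p x + T z p y"
  unfolding T_def Badd2 by (simp add: algebra_simps sum.distrib)
lemma T_sc3: "T z p (sc a x) = a * T z p x"
  unfolding T_def Bsc2 by (simp add: algebra_simps sum_distrib_left)

definition Fm where "Fm z p q = T z p q - T p z q + T q z p"
definition h where "h z p q = c z p q - Fm z p q"

lemma h_skew23: "h z p q = - h z q p"
proof -
  have "c z p q + c z q p = \<sigma> [z] (B p q)" using R1[of z p q] by simp
  moreover have "Fm z p q + Fm z q p = \<sigma> [z] (B p q)"
    using T_metric[of z p q] unfolding Fm_def by (simp add: algebra_simps)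
  ultimately show ?thesis unfolding h_def by (simp add: algebra_simps eq_neg_iff_add_eq_0)
qed

lemma h_skew12: "h z p q = - h p z q"
proof -
  have "c z p q + c p z q = \<sigma> [q] (B z p)" using R2[of z p q] by simp
  moreover have "Fm z p q + Fm p z q = \<sigma> [q] (B z p)"
    using T_metric[of q z p] unfolding Fm_def by (simp add: algebra_simps)
  ultimately show ?thesis unfolding h_def by (simp add: algebra_simps eq_neg_iff_add_eq_0)
qed

lemma h_add1: "h (x + y) p q = h x p q + h y p q"
  unfolding h_def Fm_def c_add1 T_add1 T_add2 T_add3 by (simp add: algebra_simps)
lemma h_add2: "h z (x + y) q = h z x q + h z y q"
  unfolding h_def Fm_def c_add2 T_add1 T_add2 T_add3 by (simp add: algebra_simps)
lemma h_phi2: "h z (sc (phi k) x) q = phi k * h z x q"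
  unfolding h_def Fm_def c_phi2 T_sc1 T_phi2 T_sc3 by (simp add: algebra_simps)
lemma h_add3: "h z p (x + y) = h z p x + h z p y"
  unfolding h_def Fm_def c_add3 T_add1 T_add2 T_add3 by (simp add: algebra_simps)
lemma h_sc3: "h z p (sc a x) = a * h z p x"
  unfolding h_def Fm_def c_sc3 T_sc1 T_sc3 by (simp add: algebra_simps)

lemma h_cyc: "h p q z = h z p q"
  using h_skew12[of p q z] h_skew23[of q p z] h_skew12[of q z p] h_skew23[of z q p] by simp

lemma h_sc1: "h (sc a z) p q = a * h z p q"
  using h_cyc[of p q "sc a z"] h_sc3[of p q a z] h_cyc[of p q z] by simp

definition Phi where "Phi z p q = T z p q + third * h z p q"

lemma Phi_metric: "Phi z p q + Phi z q p = \<sigma> [z] (B p q)"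
  using T_metric[of z p q] h_skew23[of z p q] unfolding Phi_def by (simp add: algebra_simps)

lemma Phi_add1: "Phi (x + y) p q = Phi x p q + Phi y p q"
  unfolding Phi_def T_add1 h_add1 by (simp add: algebra_simps)
lemma Phi_sc1: "Phi (sc a x) p q = a * Phi x p q"
  unfolding Phi_def T_sc1 h_sc1 by (simp add: algebra_simps)
lemma Phi_add2: "Phi z (x + y) q = Phi z x q + Phi z y q"
  unfolding Phi_def T_add2 h_add2 by (simp add: algebra_simps)
lemma Phi_phi2: "Phi z (sc (phi k) x) q = phi k * Phi z x q"
  unfolding Phi_def T_phi2 h_phi2 by (simp add: algebra_simps)
lemma Phi_add3: "Phi z p (x + y) = Phi z p x + Phi z p y"
  unfolding Phi_def T_add3 h_add3 by (simp add: algebra_simps)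
lemma Phi_sc3: "Phi z p (sc a x) = a * Phi z p x"
  unfolding Phi_def T_sc3 h_sc3 by (simp add: algebra_simps)

lemma Phi_exp: "Phi z p q = (\<Sum>k<n. B (f k) z * Phi (e k) p q)"
  by (rule expand[of "\<lambda>z. Phi z p q"]) (simp_all add: Phi_add1 Phi_sc1)

lemma Phi_id: "Phi x y u - Phi y x u + Phi u x y = c x y u"
proof -
  have 1: "h y x u = - h x y u" by (rule h_skew12[of y x u])
  have 2: "h u x y = h x y u" using h_cyc[of x y u] by simp
  have "Phi x y u - Phi y x u + Phi u x y = Fm x y u + (3 * third) * h x y u"
    unfolding Phi_def Fm_def 1 2 by (simp add: algebra_simps)
  then show ?thesis using third unfolding h_def by simp
qed

definition Dv where "Dv k p = (SOME v. B v = (\<lambda>q. Phi (e k) p q))"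

lemma B_Dv: "B (Dv k p) q = Phi (e k) p q"
proof -
  have "\<exists>v. B v = (\<lambda>q. Phi (e k) p q)"
    by (rule Bsurj) (simp_all add: Phi_add3 Phi_sc3)
  then have "B (Dv k p) = (\<lambda>q. Phi (e k) p q)" unfolding Dv_def by (rule someI_ex)
  then show ?thesis by simp
qed

lemma Dv_add: "Dv k (x + y) = Dv k x + Dv k y"
  by (rule Binj) (simp add: fun_eq_iff B_Dv Badd1 Phi_add2)
lemma Dv_phi: "Dv k (sc (phi r) x) = sc (phi r) (Dv k x)"
  by (rule Binj) (simp add: fun_eq_iff B_Dv Bsc1 Phi_phi2)

definition D where "D k xs = (if length xs = 1 then Dv k (hd xs) else 0)"

lemma D_Cmod: "D k \<in> Cmod phi sc B 2"
proof -
  have ml: "multilinear_R phi sc 1 (+) (\<lambda>c v. sc (phi c) v) (D k)"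
    unfolding multilinear_R_def
  proof (intro conjI allI impI)
    fix xs :: "'b list" and i :: nat and y z
    assume "length xs = 1" "i < 1"
    then show "D k (xs[i := y + z]) = D k (xs[i := y]) + D k (xs[i := z])"
      by (cases xs) (auto simp: D_def Dv_add)
  next
    fix xs :: "'b list" and i :: nat and r y
    assume "length xs = 1" "i < 1"
    then show "D k (xs[i := sc (phi r) y]) = sc (phi r) (D k (xs[i := y]))"
      by (cases xs) (auto simp: D_def Dv_phi)
  qed
  have s: "\<forall>xs u w. length xs = 0 \<longrightarrow>
      (\<lambda>_. \<sigma> [e k]) xs (B u w) = B (D k (xs @ [u])) w + B u (D k (xs @ [w]))"
  proof (intro allI impI)
    fix xs :: "'b list" and u w
    assume "length xs = 0"
    then show "(\<lambda>_. \<sigma> [e k]) xs (B u w) = B (D k (xs @ [u])) w + B u (D k (xs @ [w]))"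
      using Phi_metric[of "e k" u w] by (simp add: D_def B_Dv Bsym[of u "Dv k w"])
  qed
  show ?thesis unfolding Cmod_def
    apply (simp only: mem_Collect_eq)
    apply (intro conjI exI[of _ "\<lambda>_. \<sigma> [e k]"])
    using ml s der[of "e k"] by (auto simp: D_def multilinear_R_def)
qed

lemma main_eq: "gsingle 3 (encC B 3 C) =
   (\<lambda>d xs. \<Sum>k<n. gwedge (gsingle 1 (encE B (f k))) (gsingle 2 (encC B 2 (D k))) d xs)"
proof (intro ext)
  fix d and xs :: "'b list"
  show "gsingle 3 (encC B 3 C) d xs =
    (\<Sum>k<n. gwedge (gsingle 1 (encE B (f k))) (gsingle 2 (encC B 2 (D k))) d xs)"
  proof (cases "d = 3 \<and> length xs = 3")
    case False
    then show ?thesis unfolding gwedge_12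
      by (auto simp: gsingle_def encC_def wedge_len)
  next
    case True
    then obtain x1 x2 u where xs: "xs = [x1, x2, u]" and d: "d = 3"
      by (cases xs; cases "tl xs"; cases "tl (tl xs)") (auto simp: numeral_3_eq_3)
    have "(\<Sum>k<n. gwedge (gsingle 1 (encE B (f k))) (gsingle 2 (encC B 2 (D k))) d xs)
      = (\<Sum>k<n. B (f k) x1 * Phi (e k) x2 u - B (f k) x2 * Phi (e k) x1 u + Phi (e k) x1 x2 * B (f k) u)"
      unfolding gwedge_12 xs d by (simp add: gsingle_def wedge_12 D_def B_Dv encE_def encC_def algebra_simps)
    also have "\<dots> = Phi x1 x2 u - Phi x2 x1 u + Phi u x1 x2"
      by (subst (1 2 3) Phi_exp) (simp add: sum.distrib sum_subtractf algebra_simps)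
    also have "\<dots> = c x1 x2 u" by (rule Phi_id)
    finally show ?thesis by (simp add: xs d gsingle_def encC_def c_def)
  qed
qed

lemma main: "gsingle 3 (encC B 3 C) \<in> gen_subalg phi sc B"
  unfolding main_eq by (intro gen_sum genWedge genE genC2 D_Cmod)

end

lemma phi_of_nat: "unital_ring_hom phi \<Longrightarrow> phi (of_nat m) = of_nat m"
proof (induction m)
  case 0
  have "phi (0 + 0) = phi 0 + phi 0" using 0 unfolding unital_ring_hom_def by blast
  then show ?case by simp
next
  case (Suc m) then show ?case unfolding unital_ring_hom_def by simp
qed

lemma inv_nat:
  assumes "contains_rationals TYPE('r::comm_ring_1)" "unital_ring_hom (phi :: 'r \<Rightarrow> 'a::comm_ring_1)" "0 < m"
  shows "\<exists>t::'a. of_nat m * t = 1"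
proof -
  obtain c :: 'r where "of_nat m * c = 1" using assms(1,3) unfolding contains_rationals_def by blast
  then have "phi (of_nat m * c) = 1" using assms(2) unfolding unital_ring_hom_def by simp
  then have "of_nat m * phi c = 1" using assms(2) phi_of_nat[OF assms(2)] unfolding unital_ring_hom_def by metis
  then show ?thesis by blast
qed

lemma frame_exists:
  assumes md: "module sc" and fg: "fg_projective sc"
    and nd: "strongly_nondegenerate sc (B :: 'e::ab_group_add \<Rightarrow> 'e \<Rightarrow> 'a::comm_ring_1)"
  shows "\<exists>(n::nat) e f. \<forall>z. z = (\<Sum>k<n. sc (B (f k) z) (e k))"
proof -
  interpret module sc by (rule md)
  obtain n :: nat and i p where
    i0: "\<forall>x k. n \<le> k \<longrightarrow> i x k = 0" and
    iadd: "\<forall>x y. i (x + y) = (\<lambda>k. i x k + i y k)" and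
    isc: "\<forall>a x. i (sc a x) = (\<lambda>k. a * i x k)" and
    padd: "\<forall>f g. p (\<lambda>k. f k + g k) = p f + p g" and
    psc: "\<forall>a f. p (\<lambda>k. a * f k) = sc a (p f)" and
    pi: "\<forall>x. p (i x) = x"
    using fg unfolding fg_projective_def by blast
  have "\<forall>k. \<exists>v. B v = (\<lambda>x. i x k)"
  proof
    fix k
    have "module_hom sc (*) (\<lambda>x. i x k)"
      unfolding module_hom_def module_hom_axioms_def using md module_mult iadd isc by auto
    then show "\<exists>v. B v = (\<lambda>x. i x k)"
      using nd unfolding strongly_nondegenerate_def bij_betw_def by (metis mem_Collect_eq rangeE)
  qed
  then obtain f where f: "\<And>k. B (f k) = (\<lambda>x. i x k)" by metis
  define e where "e k = p (\<lambda>j. if j = k then 1 else 0)" for k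
  have p0: "p (\<lambda>j. 0) = 0" using psc[rule_format, of 0 "\<lambda>j. 0"] by simp
  have psum: "p (\<lambda>j. \<Sum>k<m. a k * (if j = k then 1 else 0)) = (\<Sum>k<m. sc (a k) (e k))" for m a
  proof (induction m)
    case 0 then show ?case using p0 by simp
  next
    case (Suc m)
    have "p (\<lambda>j. \<Sum>k<Suc m. a k * (if j = k then 1 else 0))
        = p (\<lambda>j. (\<Sum>k<m. a k * (if j = k then 1 else 0)) + a m * (if j = m then 1 else 0))" by simp
    also have "\<dots> = p (\<lambda>j. \<Sum>k<m. a k * (if j = k then 1 else 0)) + p (\<lambda>j. a m * (if j = m then 1 else 0))"
      using padd[rule_format, of "\<lambda>j. \<Sum>k<m. a k * (if j = k then 1 else 0)" "\<lambda>j. a m * (if j = m then 1 else 0)"] by simp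
    also have "\<dots> = (\<Sum>k<Suc m. sc (a k) (e k))" using Suc psc by (simp add: e_def)
    finally show ?case .
  qed
  have "\<forall>z. z = (\<Sum>k<n. sc (B (f k) z) (e k))"
  proof
    fix z
    have "i z = (\<lambda>j. \<Sum>k<n. i z k * (if j = k then 1 else 0))"
    proof
      fix j show "i z j = (\<Sum>k<n. i z k * (if j = k then 1 else 0))"
        using i0 by (cases "j < n") (auto simp: if_distrib cong: if_cong)
    qed
    then have "z = p (\<lambda>j. \<Sum>k<n. i z k * (if j = k then 1 else 0))" using pi by metis
    then show "z = (\<Sum>k<n. sc (B (f k) z) (e k))" using psum f by simp
  qed
  then show ?thesis by blast
qed

theorem mainTheorem5:
  fixes phi :: "'r::comm_ring_1 \<Rightarrow> 'a::comm_ring_1"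
    and sc :: "'a \<Rightarrow> 'e::ab_group_add \<Rightarrow> 'e"
    and B :: "'e \<Rightarrow> 'e \<Rightarrow> 'a"
  assumes "contains_rationals TYPE('r)"
    and "unital_ring_hom phi"
    and "module sc"
    and "fg_projective sc"
    and "bilinear_form sc B"
    and "symmetric_form B"
    and "strongly_nondegenerate sc B"
    and "full_form B"
  shows "Chat3 phi sc B = Cmod phi sc B 3"
proof
  show "Chat3 phi sc B \<subseteq> Cmod phi sc B 3" unfolding Chat3_def by blast
next
  show "Cmod phi sc B 3 \<subseteq> Chat3 phi sc B"
  proof
    fix C assume C: "C \<in> Cmod phi sc B 3"
    obtain n :: nat and e f where fr: "\<forall>z. z = (\<Sum>k<n. sc (B (f k) z) (e k))"
      using frame_exists[OF assms(3,4,7)] by blast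
    obtain half :: 'a where half: "of_nat 2 * half = 1" using inv_nat[OF assms(1,2), of 2] by auto
    obtain third :: 'a where third: "of_nat 3 * third = 1" using inv_nat[OF assms(1,2), of 3] by auto
    obtain \<sigma> where
      Cml: "multilinear_R phi sc 2 (+) (\<lambda>c v. sc (phi c) v) C"
      and sder: "\<forall>xs. length xs = 1 \<longrightarrow> is_derivation phi (\<sigma> xs)"
      and sml: "multilinear_R phi sc 1 (\<lambda>D1 D2 a. D1 a + D2 a) (\<lambda>c D a. phi c * D a) \<sigma>"
      and s1: "\<forall>xs u w. length xs = 1 \<longrightarrow> \<sigma> xs (B u w) = B (C (xs @ [u])) w + B u (C (xs @ [w]))"
      and s2: "\<forall>xs u i. length xs = 2 \<longrightarrow> i < 1 \<longrightarrow>
           B (C xs + C (xs[i := xs ! Suc i, Suc i := xs ! i])) u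
             = \<sigma> (take i xs @ drop (Suc (Suc i)) xs @ [u]) (B (xs ! i) (xs ! Suc i))"
      using C unfolding Cmod_def by auto
    interpret cfgC sc phi B n e f half third C \<sigma>
      apply unfold_locales
      using assms fr half third Cml sder sml s1 s2 by (auto simp: module_def)
    have "gsingle 3 (encC B 3 C) \<in> gen_subalg phi sc B" by (rule main)
    then show "C \<in> Chat3 phi sc B" using C unfolding Chat3_def by blast
  qed
qed

end
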